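(* Fix $R_{\rm eff}>0$ and assume that all link SNRs $\gamma^{SR}_k,\gamma^{SD}_k,\gamma^{RD}_k$, $k=1,\dots,K$, are mutually independent, and that in every slot the SNR of link $\mathsf{XY}\in\{SR,SD,RD\}$ has the truncated exponential density $f(\gamma)=c\,e^{-\gamma/\bar\gamma^{\mathsf{XY}}}$ for $\gamma\ge\gamma_{tr}$ and $0$ otherwise, with $c=e^{\gamma_{tr}/\bar\gamma^{\mathsf{XY}}}/\bar\gamma^{\mathsf{XY}}$, a common threshold $\gamma_{tr}>0$ and fixed parameters $\bar\gamma^{SR},\bar\gamma^{SD},\bar\gamma^{RD}>0$. Then: (i) without relaying, for every $K\ge1$, $\bar J^{\text{no relay}}_K(R_{\rm eff})\to\infty$ as $\gamma_{tr}\to0^+$; (ii) with relaying, for every $K\ge2$, $\bar J_K(R_{\rm eff})$ remains bounded as $\gamma_{tr}\to0^+$ (i.e. $\limsup_{\gamma_{tr}\to0^+}\bar J_K(R_{\rm eff})<\infty$).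
   Context: Notation: $I(x)=\log(1+x)$, $I^{-1}(x)=e^x-1$, $\tilde\gamma_k=\max(\gamma^{SD}_k,\gamma^{RD}_k)$. Relay problem with $K$ slots and message size $B=KR_{\rm eff}$ nats: in slot $k$ the link SNRs are $(\gamma^{SR}_k,\gamma^{SD}_k,\gamma^{RD}_k)$; a power $p_k\ge0$ is chosen causally (as a function of the SNRs of slots $1,\dots,k$). Remaining information: $b^R_1=b^D_1=B$; if $b^R_k>0$ (Phase 1, the source transmits) then $b^R_{k+1}=b^R_k-I(p_k\gamma^{SR}_k)$, $b^D_{k+1}=b^D_k-I(p_k\gamma^{SD}_k)$; if $b^R_k\le0$ (Phase 2, whichever of source/relay has the larger SNR to the destination transmits) then $b^R_{k+1}=b^R_k$, $b^D_{k+1}=b^D_k-I(p_k\tilde\gamma_k)$. The constraint is $b^D_{K+1}\le0$ a.s. The normalized minimum expected sum energy (NMESE) is $\bar J_K(R_{\rm eff})=\frac1K\mathbb{E}_{\boldsymbol\gamma_1}[J^\star(\boldsymbol\gamma_1)]$, where $J^\star(\boldsymbol\gamma_1)$ is the infimum over causal feasible policies of $\mathbb{E}[\sum_{k=1}^Kp_k\mid\boldsymbol\gamma_1]$. "No relaying" means the relay never assists, i.e. the same problem with $\gamma^{SR}_k\equiv0$ (so Phase 2 never occurs and the constraint is $\sum_k I(p_k\gamma^{SD}_k)\ge B$); its NMESE is denoted $\bar J^{\text{no relay}}_K(R_{\rm eff})$. *)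

theory Defs
  imports "HOL-Probability.Probability"
begin

type_synonym snr = "real \<times> real \<times> real"  (* (gamma_SR, gamma_SD, gamma_RD) of one slot *)

definition trexp :: "real \<Rightarrow> real \<Rightarrow> real measure" where
  "trexp tr gb = density lborel
     (\<lambda>x. ennreal (indicator {tr..} x * (exp (tr / gb) / gb) * exp (- x / gb)))"

text \<open>Remaining information after k slots: bstate B q g k = (b^R_{k+1}, b^D_{k+1}),
  where q j is the power in slot j and g j the SNR triple of slot j.\<close>
fun bstate :: "real \<Rightarrow> (nat \<Rightarrow> real) \<Rightarrow> (nat \<Rightarrow> snr) \<Rightarrow> nat \<Rightarrow> real \<times> real" where
  "bstate B q g 0 = (B, B)"
| "bstate B q g (Suc k) =
     (let (bR, bD) = bstate B q g k; (sr, sd, rd) = g (Suc k); p = q (Suc k) in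
      if bR > 0 then (bR - ln (1 + p * sr), bD - ln (1 + p * sd))
      else (bR, bD - ln (1 + p * max sd rd)))"

text \<open>A policy assigns to slot k and SNR trajectory h the power pol k h.\<close>
definition feasible :: "nat \<Rightarrow> real \<Rightarrow> (nat \<Rightarrow> (nat \<Rightarrow> snr) \<Rightarrow> real) \<Rightarrow> (nat \<Rightarrow> snr) \<Rightarrow> bool" where
  "feasible K B pol h \<longleftrightarrow> snd (bstate B (\<lambda>k. pol k h) h K) \<le> 0"

definition admissible :: "nat \<Rightarrow> (nat \<Rightarrow> (nat \<Rightarrow> snr) \<Rightarrow> real) \<Rightarrow> bool" where
  "admissible K pol \<longleftrightarrow> (\<forall>k\<in>{1..K}.
     (\<forall>h. 0 \<le> pol k h) \<and>
     (\<forall>h h'. (\<forall>j\<in>{1..k}. h j = h' j) \<longrightarrow> pol k h = pol k h') \<and>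
     pol k \<in> borel_measurable (PiM {1..K} (\<lambda>_. borel)))"

text \<open>J*(g): minimum expected sum energy given the first-slot SNRs g; slots 2..K are
  i.i.d. with law D; the constraint must hold almost surely given gamma_1 = g.\<close>
definition J_star :: "nat \<Rightarrow> real \<Rightarrow> snr measure \<Rightarrow> snr \<Rightarrow> ennreal" where
  "J_star K B D g =
     (INF pol \<in> {pol. admissible K pol \<and>
                       (AE h in PiM {2..K} (\<lambda>_. D). feasible K B pol (h(1 := g)))}.
        \<integral>\<^sup>+ h. (\<Sum>k\<in>{1..K}. ennreal (pol k (h(1 := g)))) \<partial>(PiM {2..K} (\<lambda>_. D)))"

text \<open>NMESE with K slots, rate Reff (B = K Reff), per-slot SNR law D.\<close>
definition nmese :: "nat \<Rightarrow> real \<Rightarrow> snr measure \<Rightarrow> ennreal" where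
  "nmese K Reff D = ennreal (1 / real K) * (\<integral>\<^sup>+ g. J_star K (real K * Reff) D g \<partial>D)"

definition relay_law :: "real \<Rightarrow> real \<Rightarrow> real \<Rightarrow> real \<Rightarrow> snr measure" where
  "relay_law tr gSR gSD gRD = trexp tr gSR \<Otimes>\<^sub>M (trexp tr gSD \<Otimes>\<^sub>M trexp tr gRD)"

text \<open>No relaying: the same problem with gamma_SR identically 0.\<close>
definition norelay_law :: "real \<Rightarrow> real \<Rightarrow> real \<Rightarrow> snr measure" where
  "norelay_law tr gSD gRD = return lborel 0 \<Otimes>\<^sub>M (trexp tr gSD \<Otimes>\<^sub>M trexp tr gRD)"

end

theory Submission
  imports Defs "HOL-Real_Asymp.Real_Asymp"
begin


lemma sets_trexp[measurable_cong, simp]: "sets (trexp tr gb) = sets borel"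
  by (simp add: trexp_def)

lemma space_trexp[simp]: "space (trexp tr gb) = UNIV"
  by (simp add: trexp_def)

lemma deriv_expc: "DERIV (\<lambda>x. - exp ((tr - x) * c)) x :> exp ((tr - x) * c) * c"
proof -
  have "DERIV (\<lambda>x. (tr - x) * c) x :> -c"
    using DERIV_cmult[OF DERIV_diff[OF DERIV_const DERIV_ident], of c] by (simp add: mult.commute)
  from DERIV_minus[OF DERIV_chain2[OF DERIV_exp this]] show ?thesis by simp
qed

lemma prob_trexp:
  assumes gb: "gb > 0"
  shows "prob_space (trexp tr gb)"
proof (rule prob_spaceI)
  have eq: "\<And>x. ennreal (indicator {tr..} x * (exp (tr / gb) / gb) * exp (- x / gb))
      = ennreal (exp ((tr - x) * (1/gb)) * (1/gb)) * indicator {tr..} x"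
    by (auto simp: indicator_def diff_divide_distrib exp_diff exp_minus field_simps)
  have "(\<integral>\<^sup>+x. ennreal (exp ((tr - x) * (1/gb)) * (1/gb)) * indicator {tr..} x \<partial>lborel)
        = ennreal (0 - (- exp ((tr - tr) * (1/gb))))"
  proof (rule nn_integral_FTC_atLeast[where F="\<lambda>x. - exp ((tr - x) * (1/gb))" and T=0])
    show "(\<lambda>x. exp ((tr - x) * (1/gb)) * (1/gb)) \<in> borel_measurable borel" by measurable
    show "DERIV (\<lambda>x. - exp ((tr - x) * (1/gb))) x :> exp ((tr - x) * (1/gb)) * (1/gb)" if "tr \<le> x" for x
      by (rule deriv_expc)
    show "0 \<le> exp ((tr - x) * (1/gb)) * (1/gb)" if "tr \<le> x" for x using gb by simp
    show "((\<lambda>x. - exp ((tr - x) * (1/gb))) \<longlongrightarrow> 0) at_top" 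
      using gb by real_asymp
  qed
  then have "(\<integral>\<^sup>+x. ennreal (indicator {tr..} x * (exp (tr / gb) / gb) * exp (- x / gb)) \<partial>lborel) = 1"
    by (simp only: eq) simp
  then show "emeasure (trexp tr gb) (space (trexp tr gb)) = 1"
    unfolding trexp_def by (subst emeasure_density) auto
qed



lemma bstate_Suc_alt: "bstate B q g (Suc k) = (let S = bstate B q g k in
   if fst S > 0 then (fst S - ln (1 + q (Suc k) * fst (g (Suc k))), snd S - ln (1 + q (Suc k) * fst (snd (g (Suc k)))))
   else (fst S, snd S - ln (1 + q (Suc k) * max (fst (snd (g (Suc k)))) (snd (snd (g (Suc k)))))))"
  by (simp add: Let_def split: prod.split)

lemma bstate_cong:
  assumes "\<And>k. k \<in> {1..n} \<Longrightarrow> q k = q' k" "\<And>k. k \<in> {1..n} \<Longrightarrow> g k = g' k"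
  shows "bstate B q g n = bstate B q' g' n"
  using assms
proof (induction n)
  case 0 then show ?case by simp
next
  case (Suc n)
  have "bstate B q g n = bstate B q' g' n" using Suc by auto
  moreover have "q (Suc n) = q' (Suc n)" "g (Suc n) = g' (Suc n)" using Suc.prems by auto
  ultimately show ?case by (simp only: bstate_Suc_alt)
qed

lemma bstate_meas:
  assumes G: "\<And>k. k \<in> {1..n} \<Longrightarrow> (\<lambda>h. G h k) \<in> measurable M (borel \<Otimes>\<^sub>M (borel \<Otimes>\<^sub>M borel))"
    and Q: "\<And>k. k \<in> {1..n} \<Longrightarrow> (\<lambda>h. Q h k) \<in> borel_measurable M"
  shows "(\<lambda>h. fst (bstate B (Q h) (G h) n)) \<in> borel_measurable M \<and>
         (\<lambda>h. snd (bstate B (Q h) (G h) n)) \<in> borel_measurable M"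
  using G Q
proof (induction n)
  case 0 then show ?case by simp
next
  case (Suc n)
  have IH: "(\<lambda>h. fst (bstate B (Q h) (G h) n)) \<in> borel_measurable M"
           "(\<lambda>h. snd (bstate B (Q h) (G h) n)) \<in> borel_measurable M" using Suc by auto
  have [measurable]: "(\<lambda>h. G h (Suc n)) \<in> measurable M (borel \<Otimes>\<^sub>M (borel \<Otimes>\<^sub>M borel))"
    "(\<lambda>h. Q h (Suc n)) \<in> borel_measurable M" using Suc.prems by auto
  note [measurable] = IH
  show ?case unfolding bstate_Suc_alt Let_def
    by (auto simp del: bstate.simps)
qed

lemma step_ineq:
  fixes V :: ennreal
  assumes p: "p \<ge> 0"
  shows "ennreal bD * min (ennreal (1/s)) V \<le> ennreal p + ennreal (bD - ln (1 + p * s)) * V"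
proof (cases "s > 0 \<and> bD > 0")
  case False
  then have "ennreal bD * min (ennreal (1/s)) V = 0"
    by (auto simp: ennreal_neg min_def)
  then show ?thesis by (metis zero_le)
next
  case True
  then have s: "s > 0" and b: "bD > 0" by auto
  define x where "x = ln (1 + p * s)"
  have x0: "x \<ge> 0" using p s by (simp add: x_def)
  have xps: "x \<le> p * s" unfolding x_def using p s by (intro ln_add_one_self_le_self) simp
  have px: "x / s \<le> p" using xps s by (simp add: divide_le_eq mult.commute)
  show ?thesis
  proof (cases "x \<ge> bD")
    case True
    have "ennreal bD * min (ennreal (1/s)) V \<le> ennreal bD * ennreal (1/s)"
      by (intro mult_left_mono) auto
    also have "\<dots> = ennreal (bD / s)" using b s by (simp add: ennreal_mult'' divide_inverse)
    also have "\<dots> \<le> ennreal p" using True px s by (intro ennreal_leI) (simp add: divide_right_mono order_trans[of _ "x/s"])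
    finally show ?thesis by (simp add: add_increasing2 order_trans)
  next
    case False
    let ?m = "min (ennreal (1/s)) V"
    have "ennreal bD = ennreal x + ennreal (bD - x)" using x0 False by (simp add: ennreal_plus[symmetric])
    then have "ennreal bD * ?m = ennreal x * ?m + ennreal (bD - x) * ?m" by (simp add: distrib_right)
    also have "ennreal x * ?m \<le> ennreal x * ennreal (1/s)" by (intro mult_left_mono) auto
    also have "ennreal x * ennreal (1/s) = ennreal (x/s)" using x0 s by (simp add: ennreal_mult'' divide_inverse)
    also have "\<dots> \<le> ennreal p" using px by (intro ennreal_leI)
    also have "ennreal (bD - x) * ?m \<le> ennreal (bD - x) * V" by (intro mult_left_mono) auto
    finally show ?thesis by (simp add: x_def add_mono)
  qed
qed

lemma SB_eq: "(borel \<Otimes>\<^sub>M (borel \<Otimes>\<^sub>M borel)) = (borel :: snr measure)"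
  by (simp add: borel_prod)

fun Vn :: "snr measure \<Rightarrow> nat \<Rightarrow> ennreal" where
  "Vn D 0 = \<infinity>"
| "Vn D (Suc n) = (\<integral>\<^sup>+y. min (ennreal (1 / fst (snd y))) (Vn D n) \<partial>D)"

lemma upd_meas:
  fixes m K :: nat and g :: snr
  assumes D: "sets D = sets (borel \<Otimes>\<^sub>M (borel \<Otimes>\<^sub>M borel))" and m: "m \<le> K" and K1: "1 \<le> K"
  shows "(\<lambda>h. h(1:=g)) \<in> measurable (PiM {2..m} (\<lambda>_. D)) (PiM {1..K} (\<lambda>_. borel))"
proof -
  let ?f = "\<lambda>i h. if i = (1::nat) then g else if i \<in> {2..m} then h i else undefined"
  have eq: "h(1:=g) = (\<lambda>i. ?f i h)" if "h \<in> space (PiM {2..m} (\<lambda>_. D))" for h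
    using that by (auto simp: space_PiM PiE_def extensional_def fun_eq_iff)
  have "(\<lambda>h i. ?f i h) \<in> measurable (PiM {2..m} (\<lambda>_. D)) (PiM {1..K} (\<lambda>_. borel))"
  proof (rule measurable_PiM_single')
    fix i :: nat assume "i \<in> {1..K}"
    show "?f i \<in> measurable (PiM {2..m} (\<lambda>_. D)) borel"
    proof (cases "i = 1")
      case True then show ?thesis by simp
    next
      case False
      show ?thesis
      proof (cases "i \<in> {2..m}")
        case True
        have "(\<lambda>h. h i) \<in> measurable (PiM {2..m} (\<lambda>_. D)) D"
          using True by (rule measurable_component_singleton)
        then have "(\<lambda>h. h i) \<in> measurable (PiM {2..m} (\<lambda>_. D)) borel"
          using D SB_eq by (metis measurable_cong_sets)
        then show ?thesis using True False by simp
      next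
        case F2: False
        then have "?f i = (\<lambda>h. undefined)" using False by (auto simp: fun_eq_iff)
        then show ?thesis by simp
      qed
    qed
  next
    show "(\<lambda>h i. ?f i h) \<in> space (PiM {2..m} (\<lambda>_. D)) \<rightarrow> (\<Pi>\<^sub>E i\<in>{1..K}. space borel)"
      using m K1 by (auto simp: PiE_def extensional_def)
  qed
  then show ?thesis
    by (rule measurable_cong[THEN iffD2, rotated]) (use eq in auto)
qed

lemma dp_lower:
  fixes D :: "snr measure" and pol :: "nat \<Rightarrow> (nat \<Rightarrow> snr) \<Rightarrow> real" and g :: snr and B :: real and K :: nat
  assumes Dp: "prob_space D" and Ds: "sets D = sets (borel \<Otimes>\<^sub>M (borel \<Otimes>\<^sub>M borel))"
    and D0: "AE y in D. fst y = 0"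
    and adm: "admissible K pol" and K1: "1 \<le> K" and B: "B > 0" and g: "fst g = 0"
    and feas: "AE h in PiM {2..K} (\<lambda>_. D). feasible K B pol (h(1:=g))"
  shows "ennreal B * min (ennreal (1 / fst (snd g))) (Vn D (K - 1))
     \<le> (\<integral>\<^sup>+h. (\<Sum>k\<in>{1..K}. ennreal (pol k (h(1:=g)))) \<partial>PiM {2..K} (\<lambda>_. D))"
proof -
  interpret Dp: prob_space D by (rule Dp)
  interpret P: product_sigma_finite "\<lambda>_. D"
    by unfold_locales
  have pol_nn: "\<And>k h. k \<in> {1..K} \<Longrightarrow> 0 \<le> pol k h"
    and pol_c: "\<And>k h h'. k \<in> {1..K} \<Longrightarrow> (\<forall>j\<in>{1..k}. h j = h' j) \<Longrightarrow> pol k h = pol k h'"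
    and pol_m: "\<And>k. k \<in> {1..K} \<Longrightarrow> pol k \<in> borel_measurable (PiM {1..K} (\<lambda>_. borel))"
    using adm unfolding admissible_def by blast+
  define St where "St h n = bstate B (\<lambda>k. pol k (h(1:=g))) (h(1:=g)) n" for h n
  define F where "F n h = (\<Sum>k\<in>{1..n}. ennreal (pol k (h(1:=g)))) +
     (if fst (St h n) > 0 then ennreal (snd (St h n)) * Vn D (K - n) else 0)" for n h

  have polm: "(\<lambda>h. pol k (h(1:=g))) \<in> borel_measurable (PiM {2..m} (\<lambda>_. D))"
    if "k \<in> {1..K}" "m \<le> K" for k m
    using measurable_comp[OF upd_meas[OF Ds that(2) K1] pol_m[OF that(1)]] by (simp add: comp_def)
  have compm: "(\<lambda>h. (h(1:=g)) k) \<in> measurable (PiM {2..m} (\<lambda>_. D)) (borel \<Otimes>\<^sub>M (borel \<Otimes>\<^sub>M borel))"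
    if "k \<in> {1..m}" "m \<le> K" for k m
  proof -
    have "(\<lambda>x. x k) \<in> measurable (PiM {1..K} (\<lambda>_. borel)) (borel :: snr measure)"
      using that by (intro measurable_component_singleton) auto
    from measurable_comp[OF upd_meas[OF Ds that(2) K1] this] show ?thesis
      by (simp add: comp_def SB_eq)
  qed
  have Stm: "(\<lambda>h. fst (St h n)) \<in> borel_measurable (PiM {2..m} (\<lambda>_. D)) \<and>
             (\<lambda>h. snd (St h n)) \<in> borel_measurable (PiM {2..m} (\<lambda>_. D))"
    if "n \<le> m" "m \<le> K" for n m
    unfolding St_def using that
    by (intro bstate_meas compm polm) auto
  have Fm: "F n \<in> borel_measurable (PiM {2..n} (\<lambda>_. D))" if "n \<le> K" for n
  proof -
    note [measurable] = Stm[OF order_refl that, THEN conjunct1] Stm[OF order_refl that, THEN conjunct2]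
    have [measurable]: "(\<lambda>h. pol k (h(1:=g))) \<in> borel_measurable (PiM {2..n} (\<lambda>_. D))" if "k \<in> {1..n}" for k
      using polm that \<open>n \<le> K\<close> by auto
    show ?thesis unfolding F_def[abs_def] by measurable
  qed
  have step: "integral\<^sup>N (PiM {2..n} (\<lambda>_. D)) (F n) \<le> integral\<^sup>N (PiM {2..Suc n} (\<lambda>_. D)) (F (Suc n))"
    if n1: "1 \<le> n" and nK: "n < K" for n
  proof -
    have ins: "{2..Suc n} = insert (Suc n) {2..n}" using n1 by auto
    have "integral\<^sup>N (PiM {2..Suc n} (\<lambda>_. D)) (F (Suc n)) =
        (\<integral>\<^sup>+x. (\<integral>\<^sup>+y. F (Suc n) (x(Suc n := y)) \<partial>D) \<partial>PiM {2..n} (\<lambda>_. D))"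
      unfolding ins using Fm[of "Suc n"] nK ins
      by (intro P.product_nn_integral_insert) auto
    moreover have "F n x \<le> (\<integral>\<^sup>+y. F (Suc n) (x(Suc n := y)) \<partial>D)"
      if x: "x \<in> space (PiM {2..n} (\<lambda>_. D))" for x
    proof -
      define c where "c = (\<Sum>k\<in>{1..n}. ennreal (pol k (x(1:=g))))"
      define S where "S = St x n"
      define V where "V = Vn D (K - Suc n)"
      have KV: "Vn D (K - n) = Vn D (Suc (K - Suc n))" using nK by (simp add: Suc_diff_Suc)
      define G where "G y = (if fst S > 0 then ennreal (snd S) * min (ennreal (1 / fst (snd y))) V else 0)" for y :: snr
      have agree: "((x(Suc n := y))(1:=g)) k = (x(1:=g)) k" if "k \<in> {1..n}" for y k
        using that by auto
      have polk: "pol k ((x(Suc n := y))(1:=g)) = pol k (x(1:=g))" if "k \<in> {1..n}" for y k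
        using that nK by (intro pol_c) auto
      have Stn: "St (x(Suc n := y)) n = S" for y
        unfolding St_def S_def using polk agree by (intro bstate_cong) auto
      have lastc: "((x(Suc n := y))(1:=g)) (Suc n) = y" for y using n1 by auto
      have pnn: "0 \<le> pol (Suc n) ((x(Suc n := y))(1:=g))" for y using nK by (intro pol_nn) auto
      have ineq: "c + G y \<le> F (Suc n) (x(Suc n := y))" if y0: "fst y = 0" for y
      proof -
        define p where "p = pol (Suc n) ((x(Suc n := y))(1:=g))"
        have sumeq: "(\<Sum>k\<in>{1..Suc n}. ennreal (pol k ((x(Suc n := y))(1:=g)))) = c + ennreal p"
          unfolding c_def p_def using polk by (simp add: sum.cl_ivl_Suc)
        have StS: "St (x(Suc n := y)) (Suc n) = (if fst S > 0 then (fst S - ln (1 + p * fst y), snd S - ln (1 + p * fst (snd y)))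
           else (fst S, snd S - ln (1 + p * max (fst (snd y)) (snd (snd y)))))"
          using Stn[of y] lastc[of y] unfolding St_def p_def by (simp only: bstate_Suc_alt Let_def)
        show ?thesis
        proof (cases "fst S > 0")
          case True
          have "G y \<le> ennreal p + ennreal (snd S - ln (1 + p * fst (snd y))) * V"
            unfolding G_def using True pnn[of y] by (simp add: p_def step_ineq)
          then have "c + G y \<le> c + ennreal p + ennreal (snd S - ln (1 + p * fst (snd y))) * V"
            by (simp add: add.assoc add_left_mono)
          also have "\<dots> = F (Suc n) (x(Suc n := y))"
            unfolding F_def sumeq StS V_def using True y0 by simp
          finally show ?thesis .
        next
          case False
          have "c + G y = c" unfolding G_def using False by simp
          also have "c \<le> c + ennreal p" by simp
          also have "\<dots> \<le> F (Suc n) (x(Suc n := y))"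
            unfolding F_def sumeq by simp
          finally show ?thesis .
        qed
      qed
      have Gm: "G \<in> borel_measurable D"
        unfolding G_def[abs_def] using Ds by (simp cong: measurable_cong_sets)
      have "(\<integral>\<^sup>+y. c + G y \<partial>D) = c + (\<integral>\<^sup>+y. G y \<partial>D)"
        using Gm by (simp add: nn_integral_add Dp.emeasure_space_1)
      also have "(\<integral>\<^sup>+y. G y \<partial>D) = (if fst S > 0 then ennreal (snd S) * Vn D (K - n) else 0)"
        unfolding G_def KV Vn.simps using Ds
        by (auto simp: nn_integral_cmult V_def cong: measurable_cong_sets)
      finally have "F n x = (\<integral>\<^sup>+y. c + G y \<partial>D)"
        unfolding F_def c_def S_def by simp
      also have "\<dots> \<le> (\<integral>\<^sup>+y. F (Suc n) (x(Suc n := y)) \<partial>D)"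
        by (intro nn_integral_mono_AE) (use D0 ineq in \<open>auto elim: AE_mp\<close>)
      finally show ?thesis .
    qed
    ultimately show ?thesis by (simp add: nn_integral_mono)
  qed
  have chain: "integral\<^sup>N (PiM {2..K - d} (\<lambda>_. D)) (F (K - d)) \<le> integral\<^sup>N (PiM {2..K} (\<lambda>_. D)) (F K)"
    if "1 \<le> K - d" for d
    using that
  proof (induction d)
    case 0 then show ?case by simp
  next
    case (Suc d)
    have "K - d = Suc (K - Suc d)" using Suc.prems by simp
    then have "integral\<^sup>N (PiM {2..K - Suc d} (\<lambda>_. D)) (F (K - Suc d)) \<le> integral\<^sup>N (PiM {2..K - d} (\<lambda>_. D)) (F (K - d))"
      using step[of "K - Suc d"] Suc.prems by simp
    also have "\<dots> \<le> integral\<^sup>N (PiM {2..K} (\<lambda>_. D)) (F K)"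
      using Suc by simp
    finally show ?case .
  qed
  have "integral\<^sup>N (PiM {2..1} (\<lambda>_. D)) (F 1) = F 1 (\<lambda>_. undefined)"
    by (simp add: PiM_empty nn_integral_count_space_finite)
  moreover have "ennreal B * min (ennreal (1 / fst (snd g))) (Vn D (K - 1)) \<le> F 1 (\<lambda>_. undefined)"
  proof -
    define p where "p = pol 1 ((\<lambda>_. undefined)(1:=g))"
    have "0 \<le> p" unfolding p_def using K1 by (intro pol_nn) auto
    have St1: "St (\<lambda>_. undefined) 1 = (B, B - ln (1 + p * fst (snd g)))"
      unfolding St_def p_def using B g by (cases g) (simp add: Let_def)
    have "F 1 (\<lambda>_. undefined) = ennreal p + ennreal (B - ln (1 + p * fst (snd g))) * Vn D (K - 1)"
      unfolding F_def St1 p_def using B by simp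
    then show ?thesis using step_ineq[OF \<open>0 \<le> p\<close>] by simp
  qed
  moreover have "integral\<^sup>N (PiM {2..K} (\<lambda>_. D)) (F K) \<le> (\<integral>\<^sup>+h. (\<Sum>k\<in>{1..K}. ennreal (pol k (h(1:=g)))) \<partial>PiM {2..K} (\<lambda>_. D))"
  proof (intro nn_integral_mono_AE)
    show "AE h in PiM {2..K} (\<lambda>_. D). F K h \<le> (\<Sum>k\<in>{1..K}. ennreal (pol k (h(1:=g))))"
      using feas
    proof (rule AE_mp, intro AE_I2 impI)
      fix h assume "feasible K B pol (h(1:=g))"
      then have "snd (St h K) \<le> 0" unfolding feasible_def St_def by simp
      then show "F K h \<le> (\<Sum>k\<in>{1..K}. ennreal (pol k (h(1:=g))))"
        unfolding F_def by (simp add: ennreal_neg)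
    qed
  qed
  ultimately show ?thesis using chain[of "K - 1"] K1 by simp
qed



lemma sets_norelay: "sets (norelay_law tr gSD gRD) = sets (borel \<Otimes>\<^sub>M (borel \<Otimes>\<^sub>M borel))"
  unfolding norelay_law_def by (intro sets_pair_measure_cong) auto

lemma sets_relay: "sets (relay_law tr gSR gSD gRD) = sets (borel \<Otimes>\<^sub>M (borel \<Otimes>\<^sub>M borel))"
  unfolding relay_law_def by (intro sets_pair_measure_cong) auto

lemma prob_norelay: "gSD > 0 \<Longrightarrow> gRD > 0 \<Longrightarrow> prob_space (norelay_law tr gSD gRD)"
  unfolding norelay_law_def
  by (intro prob_space_pair prob_space_return prob_trexp) auto

lemma prob_relay: "gSR > 0 \<Longrightarrow> gSD > 0 \<Longrightarrow> gRD > 0 \<Longrightarrow> prob_space (relay_law tr gSR gSD gRD)"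
  unfolding relay_law_def
  by (intro prob_space_pair prob_trexp) auto

lemma AE_norelay0:
  assumes "gSD > 0" "gRD > 0"
  shows "AE y in norelay_law tr gSD gRD. fst y = 0"
proof -
  interpret N: prob_space "trexp tr gSD \<Otimes>\<^sub>M trexp tr gRD"
    using assms by (intro prob_space_pair prob_trexp)
  interpret R: prob_space "return lborel (0::real)" by (intro prob_space_return) auto
  interpret PS: pair_sigma_finite "return lborel (0::real)" "trexp tr gSD \<Otimes>\<^sub>M trexp tr gRD" ..
  have "AE x in return lborel (0::real). AE y in trexp tr gSD \<Otimes>\<^sub>M trexp tr gRD. x = 0"
    by (subst AE_return) auto
  moreover have "{x \<in> space (return lborel (0::real) \<Otimes>\<^sub>M (trexp tr gSD \<Otimes>\<^sub>M trexp tr gRD)). fst x = 0}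
     \<in> sets (return lborel (0::real) \<Otimes>\<^sub>M (trexp tr gSD \<Otimes>\<^sub>M trexp tr gRD))"
  proof -
    have "{x \<in> space (return lborel (0::real) \<Otimes>\<^sub>M (trexp tr gSD \<Otimes>\<^sub>M trexp tr gRD)). fst x = 0}
      = {0} \<times> space (trexp tr gSD \<Otimes>\<^sub>M trexp tr gRD)"
      by (auto simp: space_pair_measure)
    also have "\<dots> \<in> sets (return lborel (0::real) \<Otimes>\<^sub>M (trexp tr gSD \<Otimes>\<^sub>M trexp tr gRD))"
      by (intro pair_measureI sets.top) auto
    finally show ?thesis .
  qed
  ultimately show ?thesis
    unfolding norelay_law_def
    by (subst (asm) PS.AE_pair_iff[where P="\<lambda>x y. x = 0"]) (auto simp del: sets_pair_measure)
qed

lemma marg_mid: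
  fixes f :: "'b \<Rightarrow> ennreal"
  assumes P1: "prob_space M1" and P2: "prob_space M2" and P3: "prob_space M3"
    and f[measurable]: "f \<in> borel_measurable M2"
  shows "(\<integral>\<^sup>+y. f (fst (snd y)) \<partial>(M1 \<Otimes>\<^sub>M (M2 \<Otimes>\<^sub>M M3))) = (\<integral>\<^sup>+x. f x \<partial>M2)"
proof -
  interpret P1: prob_space M1 by fact
  interpret P2: prob_space M2 by fact
  interpret P3: prob_space M3 by fact
  interpret P23: prob_space "M2 \<Otimes>\<^sub>M M3" by (intro prob_space_pair P2 P3)
  have "(\<integral>\<^sup>+y. f (fst (snd y)) \<partial>(M1 \<Otimes>\<^sub>M (M2 \<Otimes>\<^sub>M M3)))
      = (\<integral>\<^sup>+x. \<integral>\<^sup>+y. f (fst y) \<partial>(M2 \<Otimes>\<^sub>M M3) \<partial>M1)"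
    by (subst P23.nn_integral_fst[symmetric]) (auto simp: split_beta')
  also have "\<dots> = (\<integral>\<^sup>+x. \<integral>\<^sup>+u. \<integral>\<^sup>+v. f u \<partial>M3 \<partial>M2 \<partial>M1)"
    by (subst P3.nn_integral_fst[symmetric]) auto
  also have "\<dots> = (\<integral>\<^sup>+u. f u \<partial>M2)"
    by (simp add: P3.emeasure_space_1 P1.emeasure_space_1)
  finally show ?thesis .
qed

lemma Vn_norelay:
  assumes "gSD > 0" "gRD > 0"
  shows "Vn (norelay_law tr gSD gRD) (Suc n)
     = (\<integral>\<^sup>+x. min (ennreal (1/x)) (Vn (norelay_law tr gSD gRD) n) \<partial>trexp tr gSD)"
  unfolding Vn.simps
  by (subst (1) norelay_law_def, rule marg_mid[where f="\<lambda>x. min (ennreal (1/x)) (Vn (norelay_law tr gSD gRD) n)"])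
     (use assms in \<open>auto intro: prob_space_return prob_trexp\<close>)

lemma trexp_lower:
  assumes tr: "0 < tr" "tr \<le> a" and a: "a < gb" and A: "ennreal (1/a) \<le> A"
  shows "ennreal ((ln gb - ln a) / (exp 1 * gb)) \<le> (\<integral>\<^sup>+x. min (ennreal (1/x)) A \<partial>trexp tr gb)"
proof -
  have a0: "a > 0" and gb: "gb > 0" using tr a by auto
  have "ennreal ((ln gb - ln a) / (exp 1 * gb)) = (\<integral>\<^sup>+x. ennreal (1 / (x * (exp 1 * gb))) * indicator {a..gb} x \<partial>lborel)"
  proof (subst nn_integral_FTC_Icc[where F="\<lambda>x. ln x / (exp 1 * gb)"])
    show "(\<lambda>x. 1 / (x * (exp 1 * gb))) \<in> borel_measurable borel" by measurable
    show "DERIV (\<lambda>x. ln x / (exp 1 * gb)) x :> 1 / (x * (exp 1 * gb))" if "x \<in> {a..gb}" for x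
      using that a0 by (auto intro!: derivative_eq_intros simp: field_simps)
    show "0 \<le> 1 / (x * (exp 1 * gb))" if "x \<in> {a..gb}" for x using that a0 gb by auto
  qed (use a in \<open>auto simp: diff_divide_distrib\<close>)
  also have "\<dots> \<le> (\<integral>\<^sup>+x. ennreal (indicator {tr..} x * (exp (tr / gb) / gb) * exp (- x / gb)) * min (ennreal (1/x)) A \<partial>lborel)"
  proof (intro nn_integral_mono)
    fix x :: real
    show "ennreal (1 / (x * (exp 1 * gb))) * indicator {a..gb} x
          \<le> ennreal (indicator {tr..} x * (exp (tr / gb) / gb) * exp (- x / gb)) * min (ennreal (1/x)) A"
    proof (cases "x \<in> {a..gb}")
      case True
      then have x: "x \<ge> a" "x \<le> gb" "x > 0" using a0 by auto
      have "ennreal (1/x) \<le> ennreal (1/a)" using x a0 by (intro ennreal_leI) (simp add: frac_le)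
      then have "ennreal (1/x) \<le> A" using A by (rule order_trans)
      then have mn: "min (ennreal (1/x)) A = ennreal (1/x)" by (rule min_absorb1)
      have dens: "exp (-1) / gb \<le> exp (tr / gb) / gb * exp (- x / gb)"
      proof -
        have e1: "-1 \<le> (tr - x)/gb" using x tr gb by (simp add: field_simps)
        have "exp (-1) \<le> exp ((tr - x)/gb)" using e1 by simp
        also have "exp ((tr - x)/gb) = exp (tr/gb) * exp (- x / gb)"
          by (simp add: exp_add[symmetric] diff_divide_distrib)
        finally have "exp (-1) / gb \<le> exp (tr/gb) * exp (- x / gb) / gb"
          using gb by (intro divide_right_mono) auto
        then show ?thesis by simp
      qed
      have "1 / (x * (exp 1 * gb)) = exp (-1) / gb * (1/x)" by (simp add: exp_minus field_simps)
      also have "\<dots> \<le> exp (tr / gb) / gb * exp (- x / gb) * (1/x)"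
        using dens x by (intro mult_right_mono) auto
      finally have le: "1 / (x * (exp 1 * gb)) \<le> exp (tr / gb) / gb * exp (- x / gb) * (1/x)" .
      have "ennreal (indicator {tr..} x * (exp (tr / gb) / gb) * exp (- x / gb)) * min (ennreal (1/x)) A
          = ennreal (exp (tr / gb) / gb * exp (- x / gb) * (1/x))"
      proof -
        have ind: "indicator {tr..} x * (exp (tr / gb) / gb) * exp (- x / gb) = exp (tr / gb) / gb * exp (- x / gb)"
          using x tr by (simp add: indicator_def)
        have "0 \<le> exp (tr / gb) / gb * exp (- x / gb)" using gb by simp
        then show ?thesis unfolding ind mn using x by (intro ennreal_mult[symmetric]) auto
      qed
      then show ?thesis using True le by (simp add: ennreal_leI)
    qed simp
  qed
  also have "\<dots> = (\<integral>\<^sup>+x. min (ennreal (1/x)) A \<partial>trexp tr gb)"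
    unfolding trexp_def by (subst nn_integral_density) auto
  finally show ?thesis .
qed

lemma lim_lower:
  assumes gb: "gb > 0" and A: "(A \<longlongrightarrow> \<infinity>) (at_right (0::real))"
  shows "((\<lambda>tr. \<integral>\<^sup>+x. min (ennreal (1/x)) (A tr) \<partial>trexp tr gb) \<longlongrightarrow> \<infinity>) (at_right 0)"
  unfolding infinity_ennreal_def tendsto_top_iff_ennreal
proof (intro allI impI)
  fix l :: real assume l: "0 \<le> l"
  define a where "a = gb * exp (-(l+1) * (exp 1 * gb))"
  have a0: "0 < a" using gb by (simp add: a_def)
  have "exp (-(l+1) * (exp 1 * gb)) < 1" using gb l by (simp add: mult_neg_pos)
  then have aless: "a < gb" using gb by (simp add: a_def)
  have val: "(ln gb - ln a) / (exp 1 * gb) = l + 1"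
    using gb by (simp add: a_def ln_mult)
  have ev1: "eventually (\<lambda>tr. 0 < tr \<and> tr \<le> a) (at_right (0::real))"
    unfolding eventually_at_right_field using a0 by (intro exI[of _ a]) auto
  have ev2: "eventually (\<lambda>tr. ennreal (1/a) < A tr) (at_right (0::real))"
    using A by (rule order_tendstoD) simp
  show "eventually (\<lambda>tr. ennreal l < (\<integral>\<^sup>+x. min (ennreal (1/x)) (A tr) \<partial>trexp tr gb)) (at_right 0)"
    using ev1 ev2
  proof eventually_elim
    case (elim tr)
    have "ennreal l < ennreal (l + 1)" using l by (simp add: ennreal_lessI)
    also have "\<dots> \<le> (\<integral>\<^sup>+x. min (ennreal (1/x)) (A tr) \<partial>trexp tr gb)"
      using trexp_lower[of tr a gb "A tr"] elim aless val by simp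
    finally show ?case .
  qed
qed

lemma Vn_norelay_tendsto:
  assumes "gSD > 0" "gRD > 0"
  shows "((\<lambda>tr. Vn (norelay_law tr gSD gRD) (Suc n)) \<longlongrightarrow> \<infinity>) (at_right 0)"
proof (induction n)
  case 0
  show ?case unfolding Vn_norelay[OF assms]
    by (rule lim_lower) (use assms in auto)
next
  case (Suc n)
  show ?case unfolding Vn_norelay[OF assms, of _ "Suc n"]
    by (rule lim_lower) (use assms Suc in auto)
qed

lemma part1:
  assumes Reff: "Reff > 0" and gSD: "gSD > 0" and gRD: "gRD > 0" and K: "K \<ge> 1"
  shows "((\<lambda>tr. nmese K Reff (norelay_law tr gSD gRD)) \<longlongrightarrow> \<infinity>) (at_right 0)"
proof -
  have low: "ennreal Reff * Vn (norelay_law tr gSD gRD) K \<le> nmese K Reff (norelay_law tr gSD gRD)" for tr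
  proof -
    define D where "D = norelay_law tr gSD gRD"
    define B where "B = real K * Reff"
    have B: "B > 0" using K Reff by (simp add: B_def)
    have Dp: "prob_space D" unfolding D_def using gSD gRD by (rule prob_norelay)
    have Ds: "sets D = sets (borel \<Otimes>\<^sub>M (borel \<Otimes>\<^sub>M borel))" unfolding D_def by (rule sets_norelay)
    have D0: "AE y in D. fst y = 0" unfolding D_def using gSD gRD by (rule AE_norelay0)
    have Jlow: "ennreal B * min (ennreal (1 / fst (snd g))) (Vn D (K - 1)) \<le> J_star K B D g"
      if "fst g = 0" for g
      unfolding J_star_def
    proof (rule INF_greatest)
      fix pol assume "pol \<in> {pol. admissible K pol \<and> (AE h in PiM {2..K} (\<lambda>_. D). feasible K B pol (h(1 := g)))}"
      then have a: "admissible K pol" "AE h in PiM {2..K} (\<lambda>_. D). feasible K B pol (h(1 := g))" by auto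
      show "ennreal B * min (ennreal (1 / fst (snd g))) (Vn D (K - 1))
            \<le> (\<integral>\<^sup>+h. (\<Sum>k\<in>{1..K}. ennreal (pol k (h(1:=g)))) \<partial>PiM {2..K} (\<lambda>_. D))"
        by (rule dp_lower[OF Dp Ds D0 a(1) K B that a(2)])
    qed
    have "(\<integral>\<^sup>+g. ennreal B * min (ennreal (1 / fst (snd g))) (Vn D (K - 1)) \<partial>D) \<le> (\<integral>\<^sup>+g. J_star K B D g \<partial>D)"
      by (rule nn_integral_mono_AE) (use D0 Jlow in \<open>auto elim: AE_mp\<close>)
    moreover have "(\<integral>\<^sup>+g. ennreal B * min (ennreal (1 / fst (snd g))) (Vn D (K - 1)) \<partial>D) = ennreal B * Vn D K"
    proof -
      have "Vn D K = Vn D (Suc (K - 1))" using K by simp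
      then show ?thesis using Ds by (simp add: nn_integral_cmult cong: measurable_cong_sets)
    qed
    ultimately have "ennreal B * Vn D K \<le> (\<integral>\<^sup>+g. J_star K B D g \<partial>D)" by simp
    then have "ennreal (1 / real K) * (ennreal B * Vn D K) \<le> nmese K Reff D"
      unfolding nmese_def B_def by (intro mult_left_mono) auto
    moreover have "ennreal (1 / real K) * (ennreal B * Vn D K) = ennreal Reff * Vn D K"
      using K Reff by (simp add: B_def mult.assoc[symmetric] ennreal_mult[symmetric])
    ultimately show ?thesis unfolding D_def by simp
  qed
  have "((\<lambda>tr. ennreal Reff * Vn (norelay_law tr gSD gRD) (Suc (K - 1))) \<longlongrightarrow> ennreal Reff * \<infinity>) (at_right 0)"
    by (intro ennreal_tendsto_cmult Vn_norelay_tendsto gSD gRD) simp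
  then have "((\<lambda>tr. ennreal Reff * Vn (norelay_law tr gSD gRD) K) \<longlongrightarrow> top) (at_right 0)"
    using K Reff by (simp add: infinity_ennreal_def)
  then have "\<forall>l\<ge>0. eventually (\<lambda>tr. ennreal l < nmese K Reff (norelay_law tr gSD gRD)) (at_right 0)"
    unfolding tendsto_top_iff_ennreal
  proof (intro allI impI)
    fix l :: real assume "0 \<le> l" "\<forall>l\<ge>0. \<forall>\<^sub>F x in at_right 0. ennreal l < ennreal Reff * Vn (norelay_law x gSD gRD) K"
    then have "\<forall>\<^sub>F x in at_right 0. ennreal l < ennreal Reff * Vn (norelay_law x gSD gRD) K" by blast
    then show "\<forall>\<^sub>F tr in at_right 0. ennreal l < nmese K Reff (norelay_law tr gSD gRD)"
      by (rule eventually_mono) (use low in \<open>blast intro: less_le_trans\<close>)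
  qed
  then show ?thesis unfolding infinity_ennreal_def tendsto_top_iff_ennreal .
qed



lemma pair_mult:
  fixes F :: "'a \<Rightarrow> ennreal" and G :: "'b \<Rightarrow> ennreal"
  assumes N: "sigma_finite_measure N" and [measurable]: "F \<in> borel_measurable M" "G \<in> borel_measurable N"
  shows "(\<integral>\<^sup>+z. F (fst z) * G (snd z) \<partial>(M \<Otimes>\<^sub>M N)) = (\<integral>\<^sup>+x. F x \<partial>M) * (\<integral>\<^sup>+y. G y \<partial>N)"
proof -
  interpret N: sigma_finite_measure N by fact
  have "(\<integral>\<^sup>+z. F (fst z) * G (snd z) \<partial>(M \<Otimes>\<^sub>M N)) = (\<integral>\<^sup>+x. \<integral>\<^sup>+y. F x * G y \<partial>N \<partial>M)"
    by (subst N.nn_integral_fst[symmetric]) auto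
  also have "\<dots> = (\<integral>\<^sup>+x. F x * (\<integral>\<^sup>+y. G y \<partial>N) \<partial>M)"
    by (simp add: nn_integral_cmult)
  also have "\<dots> = (\<integral>\<^sup>+x. F x \<partial>M) * (\<integral>\<^sup>+y. G y \<partial>N)"
    by (simp add: nn_integral_multc)
  finally show ?thesis .
qed

lemma pair_fst_int:
  fixes F :: "'a \<Rightarrow> ennreal"
  assumes N: "prob_space N" and [measurable]: "F \<in> borel_measurable M"
  shows "(\<integral>\<^sup>+z. F (fst z) \<partial>(M \<Otimes>\<^sub>M N)) = (\<integral>\<^sup>+x. F x \<partial>M)"
  using pair_mult[of N F M "\<lambda>_. 1"] N
  by (simp add: prob_space_imp_sigma_finite prob_space.emeasure_space_1)

lemma emeasure_trexp_nonpos: "tr > 0 \<Longrightarrow> emeasure (trexp tr gb) {..0} = 0"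
  unfolding trexp_def
  by (subst emeasure_density) (auto intro!: nn_integral_zero' simp: indicator_def)

lemma AE_trexp_pos:
  assumes "tr > 0" shows "AE x in trexp tr gb. x > 0"
proof -
  have "{x \<in> space (trexp tr gb). \<not> x > 0} = {..0}" by auto
  then show ?thesis using emeasure_trexp_nonpos[OF assms, of gb]
    by (intro AE_I[where N="{..0}"]) auto
qed

lemma AE_relay_pos:
  assumes tr: "tr > 0" and g: "gSR > 0" "gSD > 0" "gRD > 0"
  shows "AE y in relay_law tr gSR gSD gRD. fst y > 0 \<and> fst (snd y) > 0"
proof -
  have p: "prob_space (trexp tr gSR)" "prob_space (trexp tr gSD)" "prob_space (trexp tr gRD)"
    using g by (auto intro: prob_trexp)
  have p23: "prob_space (trexp tr gSD \<Otimes>\<^sub>M trexp tr gRD)" using p by (intro prob_space_pair)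
  let ?i = "\<lambda>x::real. indicator {..0} x :: ennreal"
  have "(\<integral>\<^sup>+y. ?i (fst y) + ?i (fst (snd y)) \<partial>relay_law tr gSR gSD gRD)
     = (\<integral>\<^sup>+y. ?i (fst y) \<partial>relay_law tr gSR gSD gRD) + (\<integral>\<^sup>+y. ?i (fst (snd y)) \<partial>relay_law tr gSR gSD gRD)"
    unfolding relay_law_def by (intro nn_integral_add) auto
  also have "(\<integral>\<^sup>+y. ?i (fst y) \<partial>relay_law tr gSR gSD gRD) = emeasure (trexp tr gSR) {..0}"
    unfolding relay_law_def by (subst pair_fst_int[OF p23]) auto
  also have "(\<integral>\<^sup>+y. ?i (fst (snd y)) \<partial>relay_law tr gSR gSD gRD) = emeasure (trexp tr gSD) {..0}"
    unfolding relay_law_def by (subst marg_mid[OF p]) auto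
  finally have "(\<integral>\<^sup>+y. ?i (fst y) + ?i (fst (snd y)) \<partial>relay_law tr gSR gSD gRD) = 0"
    using tr by (simp add: emeasure_trexp_nonpos)
  then have "AE y in relay_law tr gSR gSD gRD. ?i (fst y) + ?i (fst (snd y)) = 0"
    by (subst (asm) nn_integral_0_iff_AE) (auto simp: relay_law_def)
  then show ?thesis
    by (rule AE_mp) (auto intro!: AE_I2 simp: indicator_def split: if_splits)
qed

definition rr :: "real \<Rightarrow> ennreal" where
  "rr x = (if x > 0 then ennreal (x powr (-1/2)) else \<infinity>)"

lemma rr_meas[measurable]: "rr \<in> borel_measurable borel"
  unfolding rr_def by measurable

lemma R_bound:
  assumes tr: "tr > 0" and gb: "gb > 0"
  shows "(\<integral>\<^sup>+x. rr x \<partial>trexp tr gb) \<le> ennreal (1 + 2/gb)"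
proof -
  define f where "f x = ennreal (indicator {tr..} x * (exp (tr / gb) / gb) * exp (- x / gb))" for x :: real
  have fm[measurable]: "f \<in> borel_measurable borel" unfolding f_def by measurable
  have "(\<integral>\<^sup>+x. rr x \<partial>trexp tr gb) = (\<integral>\<^sup>+x. f x * rr x \<partial>lborel)"
    unfolding trexp_def f_def by (subst nn_integral_density) auto
  also have "\<dots> \<le> (\<integral>\<^sup>+x. f x + ennreal (1/gb) * ennreal (indicator {0..1} x * x powr (-1/2)) \<partial>lborel)"
  proof (intro nn_integral_mono)
    fix x :: real
    show "f x * rr x \<le> f x + ennreal (1/gb) * ennreal (indicator {0..1} x * x powr (-1/2))"
    proof (cases "x \<ge> tr")
      case False
      then show ?thesis by (simp add: f_def)
    next
      case True
      then have x0: "x > 0" using tr by simp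
      define d where "d = exp (tr / gb) / gb * exp (- x / gb)"
      have fx: "f x = ennreal d" using True by (simp add: f_def d_def)
      have d0: "0 \<le> d" using gb by (simp add: d_def)
      have "d = exp ((tr - x) / gb) / gb" by (simp add: d_def diff_divide_distrib exp_diff exp_minus field_simps)
      also have "\<dots> \<le> 1 / gb" using True gb by (intro divide_right_mono) (auto simp: divide_nonpos_pos)
      finally have d1: "d \<le> 1 / gb" .
      have rx: "rr x = ennreal (x powr (-1/2))" using x0 by (simp add: rr_def)
      have fr: "f x * rr x = ennreal (d * x powr (-1/2))" using d0 by (simp add: fx rx ennreal_mult)
      show ?thesis
      proof (cases "x \<ge> 1")
        case True
        have "1 \<le> x powr (1/2)" using True by (intro ge_one_powr_ge_zero) auto
        then have "x powr (-1/2) \<le> 1" by (simp add: powr_minus_divide[of x "1/2", simplified] divide_le_eq_1)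
        then have "d * x powr (-1/2) \<le> d" using d0 by (simp add: mult_left_le)
        then have "ennreal (d * x powr (-1/2)) \<le> ennreal d" by (rule ennreal_leI)
        then have "f x * rr x \<le> f x" using fr fx by simp
        then show ?thesis by (simp add: add_increasing2)
      next
        case False
        then have ind: "indicator {0..1} x = (1::real)" using x0 by simp
        have "d * x powr (-1/2) \<le> 1/gb * x powr (-1/2)" using d1 by (intro mult_right_mono) auto
        then have "ennreal (d * x powr (-1/2)) \<le> ennreal (1/gb * x powr (-1/2))" by (rule ennreal_leI)
        also have "\<dots> = ennreal (1/gb) * ennreal (indicator {0..1} x * x powr (-1/2))"
          unfolding ind using gb by (simp add: ennreal_mult[symmetric])
        finally have "f x * rr x \<le> ennreal (1/gb) * ennreal (indicator {0..1} x * x powr (-1/2))"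
          using fr by simp
        then show ?thesis by (simp add: add_increasing)
      qed
    qed
  qed
  also have "\<dots> = (\<integral>\<^sup>+x. f x \<partial>lborel) + ennreal (1/gb) * (\<integral>\<^sup>+x. ennreal (indicator {0..1} x * x powr (-1/2)) \<partial>lborel)"
    by (subst nn_integral_add) (auto simp: nn_integral_cmult)
  also have "(\<integral>\<^sup>+x. f x \<partial>lborel) = 1"
  proof -
    interpret prob_space "trexp tr gb" using gb by (rule prob_trexp)
    show ?thesis using emeasure_space_1 unfolding trexp_def f_def
      by (simp add: emeasure_density)
  qed
  also have "(\<integral>\<^sup>+x. ennreal (indicator {0..1} x * x powr (-1/2)) \<partial>lborel) = 2"
    using nn_integral_has_integral_lebesgue[OF _ has_integral_powr_from_0[of "-1/2" 1]] by simp
  finally have le: "(\<integral>\<^sup>+x. rr x \<partial>trexp tr gb) \<le> 1 + ennreal (1/gb) * 2" .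
  have "ennreal (1 + 2/gb) = ennreal 1 + ennreal (2/gb)" using gb by (intro ennreal_plus) auto
  also have "ennreal (2/gb) = ennreal (1/gb * 2)" by simp
  also have "\<dots> = ennreal (1/gb) * ennreal 2" using gb by (intro ennreal_mult) auto
  finally have "ennreal (1 + 2/gb) = 1 + ennreal (1/gb) * 2" by simp
  then show ?thesis using le by simp
qed

lemma pair_snd_int:
  fixes G :: "'b \<Rightarrow> ennreal"
  assumes M: "prob_space M" and N: "sigma_finite_measure N" and [measurable]: "G \<in> borel_measurable N"
  shows "(\<integral>\<^sup>+z. G (snd z) \<partial>(M \<Otimes>\<^sub>M N)) = (\<integral>\<^sup>+y. G y \<partial>N)"
  using pair_mult[OF N, of "\<lambda>_. 1" M G] M
  by (simp add: prob_space.emeasure_space_1)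

definition cfun :: "real \<Rightarrow> real \<Rightarrow> real" where
  "cfun B x = (if x > 0 then (exp B - 1) / x else 0)"

lemma cfun_rr:
  assumes B: "B > 0"
  shows "ennreal (cfun B (max x y)) \<le> ennreal (exp B - 1) * (rr x * rr y)"
proof (cases "x > 0 \<and> y > 0")
  case True
  then have x: "x > 0" and y: "y > 0" by auto
  define m where "m = max x y"
  have m: "m > 0" "x \<le> m" "y \<le> m" using x y by (auto simp: m_def)
  have "sqrt x * sqrt y \<le> sqrt m * sqrt m" using x y m by (intro mult_mono) auto
  then have sm: "sqrt x * sqrt y \<le> m" using m by simp
  have px: "x powr (-1/2) = 1 / sqrt x" using x by (simp add: powr_minus_divide powr_half_sqrt)
  have py: "y powr (-1/2) = 1 / sqrt y" using y by (simp add: powr_minus_divide powr_half_sqrt)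
  have eB: "exp B - 1 \<ge> 0" using B by simp
  have "cfun B m = (exp B - 1) * (1 / m)" using m by (simp add: cfun_def)
  also have "\<dots> \<le> (exp B - 1) * (1 / (sqrt x * sqrt y))"
    using sm x y eB m by (intro mult_left_mono) (auto intro!: divide_left_mono)
  also have "\<dots> = (exp B - 1) * (x powr (-1/2) * y powr (-1/2))" unfolding px py by simp
  finally have le: "cfun B m \<le> (exp B - 1) * (x powr (-1/2) * y powr (-1/2))" .
  have "ennreal (exp B - 1) * (rr x * rr y) = ennreal ((exp B - 1) * (x powr (-1/2) * y powr (-1/2)))"
    using x y eB by (simp add: rr_def ennreal_mult)
  then show ?thesis using le unfolding m_def by (simp add: ennreal_leI)
next
  case False
  have pos: "ennreal (exp B - 1) \<noteq> 0" using B by simp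
  have "rr x \<noteq> 0" "rr y \<noteq> 0" by (auto simp: rr_def)
  moreover have "rr x = \<infinity> \<or> rr y = \<infinity>" using False by (auto simp: rr_def)
  ultimately have "ennreal (exp B - 1) * (rr x * rr y) = \<infinity>"
    using pos by (auto simp: ennreal_mult_eq_top_iff)
  then show ?thesis by simp
qed

definition rpol :: "real \<Rightarrow> nat \<Rightarrow> (nat \<Rightarrow> snr) \<Rightarrow> real" where
  "rpol B k h = (if k = 1 then cfun B (max (fst (h 1)) (fst (snd (h 1))))
     else if k = 2 then cfun B (max (fst (snd (h 2))) (snd (snd (h 2)))) else 0)"

lemma cfun_nn: "B \<ge> 0 \<Longrightarrow> cfun B x \<ge> 0"
  by (simp add: cfun_def)

lemma rpol_adm:
  assumes B: "B \<ge> 0" and K: "K \<ge> 2"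
  shows "admissible K (rpol B)"
  unfolding admissible_def
proof (intro ballI conjI allI impI)
  fix k and h :: "nat \<Rightarrow> snr" assume "k \<in> {1..K}"
  show "0 \<le> rpol B k h" using B by (simp add: rpol_def cfun_nn)
next
  fix k and h h' :: "nat \<Rightarrow> snr" assume k: "k \<in> {1..K}" and eq: "\<forall>j\<in>{1..k}. h j = h' j"
  show "rpol B k h = rpol B k h'"
  proof (cases "k = 1")
    case True then show ?thesis using eq by (simp add: rpol_def)
  next
    case False
    show ?thesis
    proof (cases "k = 2")
      case True then show ?thesis using eq by (simp add: rpol_def)
    qed (use False in \<open>simp add: rpol_def\<close>)
  qed
next
  fix k assume k: "k \<in> {1..K}"
  have c[measurable]: "(\<lambda>h::nat \<Rightarrow> snr. h i) \<in> measurable (PiM {1..K} (\<lambda>_. borel)) (borel \<Otimes>\<^sub>M (borel \<Otimes>\<^sub>M borel))"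
    if "i \<in> {1..K}" for i
    by (subst SB_eq) (rule measurable_component_singleton[OF that])
  have c1[measurable]: "(\<lambda>h::nat \<Rightarrow> snr. h 1) \<in> measurable (PiM {1..K} (\<lambda>_. borel)) (borel \<Otimes>\<^sub>M (borel \<Otimes>\<^sub>M borel))"
    using c[of 1] K by auto
  have c2[measurable]: "(\<lambda>h::nat \<Rightarrow> snr. h 2) \<in> measurable (PiM {1..K} (\<lambda>_. borel)) (borel \<Otimes>\<^sub>M (borel \<Otimes>\<^sub>M borel))"
    using c[of 2] K by auto
  have cf[measurable]: "cfun B \<in> borel_measurable borel" unfolding cfun_def by measurable
  show "rpol B k \<in> borel_measurable (PiM {1..K} (\<lambda>_. borel))"
    unfolding rpol_def by measurable
qed

lemma rpol_feas:
  fixes h :: "nat \<Rightarrow> snr"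
  assumes B: "B > 0" and K: "K \<ge> 2"
    and h1: "fst (h 1) > 0" "fst (snd (h 1)) > 0" and h2: "fst (snd (h 2)) > 0"
  shows "feasible K B (rpol B) h"
proof -
  define S where "S n = bstate B (\<lambda>k. rpol B k h) h n" for n
  define sr where "sr = fst (h 1)"
  define sd where "sd = fst (snd (h 1))"
  define m1 where "m1 = max sr sd"
  define p1 where "p1 = (exp B - 1) / m1"
  have m1: "m1 > 0" using h1 by (simp add: m1_def sr_def sd_def)
  have eB: "exp B - 1 > 0" using B by simp
  have p1: "p1 = rpol B 1 h" using m1 by (simp add: rpol_def cfun_def p1_def m1_def sr_def sd_def)
  have p1nn: "p1 \<ge> 0" using m1 eB by (simp add: p1_def)
  have S1: "S 1 = (B - ln (1 + p1 * sr), B - ln (1 + p1 * sd))"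
    using B unfolding S_def by (simp add: p1 sr_def sd_def Let_def split: prod.split)
  have snd1: "snd (S 1) \<le> B" using S1 p1nn h1 by (simp add: sd_def)
  have fst1: "fst (S 1) > 0 \<Longrightarrow> snd (S 1) \<le> 0"
  proof -
    assume a: "fst (S 1) > 0"
    have "sr < m1"
    proof (rule ccontr)
      assume "\<not> sr < m1"
      then have "sr = m1" by (simp add: m1_def)
      then have "p1 * sr = exp B - 1" using m1 by (simp add: p1_def)
      then have "fst (S 1) = 0" using S1 by simp
      then show False using a by simp
    qed
    then have "m1 = sd" by (simp add: m1_def max_def split: if_splits)
    then have "p1 * sd = exp B - 1" using m1 by (simp add: p1_def)
    then show "snd (S 1) \<le> 0" using S1 by simp
  qed
  define sd2 where "sd2 = fst (snd (h 2))"
  define rd2 where "rd2 = snd (snd (h 2))"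
  define p2 where "p2 = (exp B - 1) / max sd2 rd2"
  have m2: "max sd2 rd2 > 0" using h2 by (simp add: sd2_def)
  have p2: "p2 = rpol B 2 h" using m2 by (simp add: rpol_def cfun_def p2_def sd2_def rd2_def)
  have p2nn: "p2 \<ge> 0" using m2 eB by (simp add: p2_def)
  have S2: "S 2 = (if fst (S 1) > 0 then (fst (S 1) - ln (1 + p2 * fst (h 2)), snd (S 1) - ln (1 + p2 * sd2))
      else (fst (S 1), snd (S 1) - ln (1 + p2 * max sd2 rd2)))"
  proof -
    have "S 2 = (let S' = S 1 in if fst S' > 0 then (fst S' - ln (1 + rpol B 2 h * fst (h 2)), snd S' - ln (1 + rpol B 2 h * fst (snd (h 2))))
      else (fst S', snd S' - ln (1 + rpol B 2 h * max (fst (snd (h 2))) (snd (snd (h 2))))))"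
      unfolding S_def by (simp only: numeral_2_eq_2 One_nat_def bstate_Suc_alt)
    then show ?thesis by (simp add: Let_def p2[symmetric] sd2_def[symmetric] rd2_def[symmetric])
  qed
  have snd2: "snd (S 2) \<le> 0"
  proof (cases "fst (S 1) > 0")
    case True
    have "0 \<le> ln (1 + p2 * sd2)" using p2nn h2 by (simp add: sd2_def)
    then show ?thesis using S2 fst1 True by simp
  next
    case False
    have "p2 * max sd2 rd2 = exp B - 1" using m2 by (simp add: p2_def)
    then show ?thesis using S2 False snd1 by simp
  qed
  have "snd (S (2 + d)) = snd (S 2)" for d
  proof (induction d)
    case 0 then show ?case by simp
  next
    case (Suc d)
    have "rpol B (Suc (2 + d)) h = 0" by (simp add: rpol_def)
    then show ?case using Suc unfolding S_def
      by (simp only: add_Suc_right bstate_Suc_alt Let_def) simp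
  qed
  moreover have "2 + (K - 2) = K" using K by simp
  ultimately have "snd (S K) = snd (S 2)" by metis
  then show ?thesis using snd2 unfolding feasible_def S_def by simp
qed

lemma sum12:
  assumes K: "K \<ge> 2"
  shows "(\<Sum>k\<in>{1..K}. ennreal (rpol B k h)) = ennreal (rpol B 1 h) + ennreal (rpol B 2 h)"
proof -
  have "(\<Sum>k\<in>{1..K}. ennreal (rpol B k h)) = (\<Sum>k\<in>{1,2}. ennreal (rpol B k h))"
    using K by (intro sum.mono_neutral_right) (auto simp: rpol_def)
  then show ?thesis by simp
qed

lemma J_upper:
  fixes D :: "snr measure"
  assumes B: "B > 0" and K: "K \<ge> 2" and Dp: "prob_space D"
    and Ds: "sets D = sets (borel \<Otimes>\<^sub>M (borel \<Otimes>\<^sub>M borel))"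
    and Dpos: "AE y in D. fst (snd y) > 0" and g: "fst g > 0" "fst (snd g) > 0"
  shows "J_star K B D g \<le> ennreal (cfun B (max (fst g) (fst (snd g))))
           + (\<integral>\<^sup>+y. ennreal (cfun B (max (fst (snd y)) (snd (snd y)))) \<partial>D)"
proof -
  interpret Dp: prob_space D by (rule Dp)
  interpret P: product_prob_space "\<lambda>_. D" "{2..K}" by unfold_locales
  have two: "(2::nat) \<in> {2..K}" using K by simp
  have comp2: "(\<lambda>\<omega>. \<omega> 2) \<in> measurable (PiM {2..K} (\<lambda>_. D)) D"
    using two by (rule measurable_component_singleton)
  have distr2: "distr (PiM {2..K} (\<lambda>_. D)) D (\<lambda>\<omega>. \<omega> 2) = D"
    using P.PiM_component[OF two] by simp
  have AE2: "AE h in PiM {2..K} (\<lambda>_. D). fst (snd (h 2)) > 0"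
  proof -
    have "AE y in distr (PiM {2..K} (\<lambda>_. D)) D (\<lambda>\<omega>. \<omega> 2). fst (snd y) > 0"
      using Dpos by (simp only: distr2)
    then show ?thesis by (rule AE_distrD[OF comp2])
  qed
  have feas: "AE h in PiM {2..K} (\<lambda>_. D). feasible K B (rpol B) (h(1 := g))"
  proof (rule AE_mp[OF AE2], intro AE_I2 impI)
    fix h :: "nat \<Rightarrow> snr" assume "fst (snd (h 2)) > 0"
    then show "feasible K B (rpol B) (h(1 := g))"
      using B K g by (intro rpol_feas) auto
  qed
  have adm: "admissible K (rpol B)" using B K by (intro rpol_adm) auto
  define c2 where "c2 y = ennreal (cfun B (max (fst (snd y)) (snd (snd y))))" for y :: snr
  have cf[measurable]: "cfun B \<in> borel_measurable borel" unfolding cfun_def by measurable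
  have c2m: "c2 \<in> borel_measurable D"
    unfolding c2_def using Ds by (simp cong: measurable_cong_sets)
  have "J_star K B D g \<le> (\<integral>\<^sup>+h. (\<Sum>k\<in>{1..K}. ennreal (rpol B k (h(1:=g)))) \<partial>PiM {2..K} (\<lambda>_. D))"
    unfolding J_star_def using adm feas by (intro INF_lower) auto
  also have "\<dots> = (\<integral>\<^sup>+h. ennreal (cfun B (max (fst g) (fst (snd g)))) + c2 (h 2) \<partial>PiM {2..K} (\<lambda>_. D))"
  proof (intro nn_integral_cong)
    fix h :: "nat \<Rightarrow> snr"
    show "(\<Sum>k\<in>{1..K}. ennreal (rpol B k (h(1:=g)))) = ennreal (cfun B (max (fst g) (fst (snd g)))) + c2 (h 2)"
      unfolding sum12[OF K] by (simp add: rpol_def c2_def)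
  qed
  also have "\<dots> = ennreal (cfun B (max (fst g) (fst (snd g)))) + (\<integral>\<^sup>+h. c2 (h 2) \<partial>PiM {2..K} (\<lambda>_. D))"
    using measurable_comp[OF comp2 c2m]
    by (subst nn_integral_add) (auto simp: comp_def P.emeasure_space_1)
  also have "(\<integral>\<^sup>+h. c2 (h 2) \<partial>PiM {2..K} (\<lambda>_. D)) = (\<integral>\<^sup>+y. c2 y \<partial>D)"
  proof -
    have "(\<integral>\<^sup>+y. c2 y \<partial>distr (PiM {2..K} (\<lambda>_. D)) D (\<lambda>\<omega>. \<omega> 2)) = (\<integral>\<^sup>+h. c2 (h 2) \<partial>PiM {2..K} (\<lambda>_. D))"
      by (rule nn_integral_distr[OF comp2]) (simp add: c2m)
    then show ?thesis by (simp only: distr2)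
  qed
  finally show ?thesis unfolding c2_def .
qed

lemma part2:
  assumes Reff: "Reff > 0" and gSR: "gSR > 0" and gSD: "gSD > 0" and gRD: "gRD > 0" and K: "K \<ge> 2"
  shows "Limsup (at_right 0) (\<lambda>tr. nmese K Reff (relay_law tr gSR gSD gRD)) < \<infinity>"
proof -
  define B where "B = real K * Reff"
  have B: "B > 0" using K Reff by (simp add: B_def)
  define e where "e = ennreal (exp B - 1)"
  define C where "C = ennreal (1 / real K) * (e * (ennreal (1 + 2/gSR) * ennreal (1 + 2/gSD))
      + e * (ennreal (1 + 2/gSD) * ennreal (1 + 2/gRD)))"
  have Cfin: "C < \<infinity>" unfolding C_def e_def by (simp add: ennreal_mult_less_top)
  have bound: "nmese K Reff (relay_law tr gSR gSD gRD) \<le> C" if tr: "tr > 0" for tr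
  proof -
    define T1 where "T1 = trexp tr gSR"
    define T2 where "T2 = trexp tr gSD"
    define T3 where "T3 = trexp tr gRD"
    define D where "D = relay_law tr gSR gSD gRD"
    have DT: "D = T1 \<Otimes>\<^sub>M (T2 \<Otimes>\<^sub>M T3)" by (simp add: D_def T1_def T2_def T3_def relay_law_def)
    have p1: "prob_space T1" and p2: "prob_space T2" and p3: "prob_space T3"
      using gSR gSD gRD by (auto simp: T1_def T2_def T3_def intro: prob_trexp)
    have p23: "prob_space (T2 \<Otimes>\<^sub>M T3)" using p2 p3 by (rule prob_space_pair)
    have Dp: "prob_space D" unfolding D_def using gSR gSD gRD by (rule prob_relay)
    interpret Dp: prob_space D by (rule Dp)
    have Ds: "sets D = sets (borel \<Otimes>\<^sub>M (borel \<Otimes>\<^sub>M borel))" unfolding D_def by (rule sets_relay)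
    have AEp: "AE y in D. fst y > 0 \<and> fst (snd y) > 0" unfolding D_def using tr gSR gSD gRD by (rule AE_relay_pos)
    have cf[measurable]: "cfun B \<in> borel_measurable borel" unfolding cfun_def by measurable
    define C2 where "C2 = (\<integral>\<^sup>+y. ennreal (cfun B (max (fst (snd y)) (snd (snd y)))) \<partial>D)"
    define E1 where "E1 = (\<integral>\<^sup>+g. ennreal (cfun B (max (fst g) (fst (snd g)))) \<partial>D)"
    have R1: "(\<integral>\<^sup>+x. rr x \<partial>T1) \<le> ennreal (1 + 2/gSR)" unfolding T1_def using tr gSR by (rule R_bound)
    have R2: "(\<integral>\<^sup>+x. rr x \<partial>T2) \<le> ennreal (1 + 2/gSD)" unfolding T2_def using tr gSD by (rule R_bound)
    have R3: "(\<integral>\<^sup>+x. rr x \<partial>T3) \<le> ennreal (1 + 2/gRD)" unfolding T3_def using tr gRD by (rule R_bound)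
    have rrT[measurable]: "rr \<in> borel_measurable T1" "rr \<in> borel_measurable T2" "rr \<in> borel_measurable T3"
      by (auto simp: T1_def T2_def T3_def)
    have sf23: "sigma_finite_measure (T2 \<Otimes>\<^sub>M T3)" using p23 by (rule prob_space_imp_sigma_finite)
    have sf3: "sigma_finite_measure T3" using p3 by (rule prob_space_imp_sigma_finite)
    have "(\<integral>\<^sup>+g. J_star K B D g \<partial>D) \<le> (\<integral>\<^sup>+g. ennreal (cfun B (max (fst g) (fst (snd g)))) + C2 \<partial>D)"
    proof (rule nn_integral_mono_AE)
      have Dpos: "AE y in D. fst (snd y) > 0" using AEp by eventually_elim auto
      show "AE g in D. J_star K B D g \<le> ennreal (cfun B (max (fst g) (fst (snd g)))) + C2"
        using AEp
      proof eventually_elim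
        case (elim g)
        then show ?case using J_upper[OF B K Dp Ds Dpos, of g] by (simp add: C2_def)
      qed
    qed
    also have "\<dots> = E1 + C2"
      unfolding E1_def using Ds
      by (subst nn_integral_add) (auto simp: Dp.emeasure_space_1 cong: measurable_cong_sets)
    also have "E1 \<le> (\<integral>\<^sup>+g. e * (rr (fst g) * rr (fst (snd g))) \<partial>D)"
      unfolding E1_def e_def using B by (intro nn_integral_mono cfun_rr)
    also have "\<dots> = e * ((\<integral>\<^sup>+x. rr x \<partial>T1) * (\<integral>\<^sup>+x. rr x \<partial>T2))"
    proof -
      have "(\<integral>\<^sup>+g. rr (fst g) * rr (fst (snd g)) \<partial>D) = (\<integral>\<^sup>+x. rr x \<partial>T1) * (\<integral>\<^sup>+w. rr (fst w) \<partial>(T2 \<Otimes>\<^sub>M T3))"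
        unfolding DT by (rule pair_mult[OF sf23]) auto
      also have "(\<integral>\<^sup>+w. rr (fst w) \<partial>(T2 \<Otimes>\<^sub>M T3)) = (\<integral>\<^sup>+x. rr x \<partial>T2)"
        by (rule pair_fst_int[OF p3]) auto
      finally show ?thesis unfolding DT by (simp add: nn_integral_cmult)
    qed
    also have "C2 \<le> (\<integral>\<^sup>+y. e * (rr (fst (snd y)) * rr (snd (snd y))) \<partial>D)"
      unfolding C2_def e_def using B by (intro nn_integral_mono cfun_rr)
    also have "\<dots> = e * ((\<integral>\<^sup>+x. rr x \<partial>T2) * (\<integral>\<^sup>+x. rr x \<partial>T3))"
    proof -
      have "(\<integral>\<^sup>+y. rr (fst (snd y)) * rr (snd (snd y)) \<partial>D) = (\<integral>\<^sup>+w. rr (fst w) * rr (snd w) \<partial>(T2 \<Otimes>\<^sub>M T3))"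
        unfolding DT by (rule pair_snd_int[OF p1 sf23, where G="\<lambda>w. rr (fst w) * rr (snd w)"]) auto
      also have "\<dots> = (\<integral>\<^sup>+x. rr x \<partial>T2) * (\<integral>\<^sup>+x. rr x \<partial>T3)"
        by (rule pair_mult[OF sf3]) auto
      finally show ?thesis unfolding DT by (simp add: nn_integral_cmult)
    qed
    finally have Jle: "(\<integral>\<^sup>+g. J_star K B D g \<partial>D) \<le> e * ((\<integral>\<^sup>+x. rr x \<partial>T1) * (\<integral>\<^sup>+x. rr x \<partial>T2))
        + e * ((\<integral>\<^sup>+x. rr x \<partial>T2) * (\<integral>\<^sup>+x. rr x \<partial>T3))" by (simp add: add_mono)
    also have "\<dots> \<le> e * (ennreal (1 + 2/gSR) * ennreal (1 + 2/gSD)) + e * (ennreal (1 + 2/gSD) * ennreal (1 + 2/gRD))"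
      by (intro add_mono mult_left_mono mult_mono R1 R2 R3) auto
    finally have "ennreal (1 / real K) * (\<integral>\<^sup>+g. J_star K B D g \<partial>D) \<le> C"
      unfolding C_def by (intro mult_left_mono) auto
    then show ?thesis unfolding nmese_def D_def B_def .
  qed
  have "Limsup (at_right 0) (\<lambda>tr. nmese K Reff (relay_law tr gSR gSD gRD)) \<le> C"
    by (rule Limsup_bounded) (use eventually_at_right_less[of "0::real"] bound in \<open>auto elim: eventually_mono\<close>)
  then show ?thesis using Cfin by (rule le_less_trans)
qed


theorem theorem3:
  fixes Reff gSR gSD gRD :: real
  assumes "Reff > 0" and "gSR > 0" and "gSD > 0" and "gRD > 0"
  shows "(\<forall>K::nat. K \<ge> 1 \<longrightarrow>
            ((\<lambda>tr. nmese K Reff (norelay_law tr gSD gRD)) \<longlongrightarrow> \<infinity>) (at_right 0))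
       \<and> (\<forall>K::nat. K \<ge> 2 \<longrightarrow>
            Limsup (at_right 0) (\<lambda>tr. nmese K Reff (relay_law tr gSR gSD gRD)) < \<infinity>)"
  using part1[OF assms(1,3,4)] part2[OF assms] by blast

end
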